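(* Let $\mathcal O$ be the suboperad of $\mathrm{CNCB}$ generated by $p:=T_{bbu}$ and $q:=T_{uub}$. Then $\mathcal O$ admits the presentation with generators $p,q$ of arity $2$ and relations $$(p\circ_2 p)\circ_2 q=(p\circ_1 q)\circ_1 p,\qquad (q\circ_2 q)\circ_2 p=(q\circ_1 p)\circ_1 q.$$ That is, $\mathcal O$ is isomorphic, via the morphism sending the generators to $p$ and $q$, to the quotient of the free operad on two binary generators by the operadic congruence generated by these two relations.
   Context: For $n\ge2$, a bicoloured noncrossing configuration (BNC) of size $n$ is a regular polygon with vertices $1,\dots,n+1$ clockwise, together with disjoint sets of blue and red arcs among the arcs $(i,j)$, $1\le i<j\le n+1$. The arcs $(i,i+1)$ are the edges ($i$th edge), $(1,n+1)$ is the base, and the others are diagonals. Coloured arcs are pairwise noncrossing ($(i,j),(k,l)$ cross iff $i<k<j<l$ or $k<i<l<j$), and red arcs are diagonals. There is one BNC of size $1$, a blue segment, which is the unit. The operad $\mathrm{CNCB}$ has the BNCs as elements (arity = size). Its composition $\mathfrak C\circ_i\mathfrak D$ ($\mathfrak C$ of size $n$, $\mathfrak D$ of size $m$) glues the base of $\mathfrak D$ on the $i$th edge of $\mathfrak C$. Arcs $(a,b)$ of $\mathfrak C$ become $(\sigma(a),\sigma(b))$ with $\sigma(v)=v$ for $v\le i$ and $v+m-1$ otherwise, and arcs $(a,b)$ of $\mathfrak D$ become $(a+i-1,b+i-1)$, keeping colours. The exception is the arc $(i,i+m)$, which is red if the $i$th edge of $\mathfrak C$ and the base of $\mathfrak D$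 are both uncoloured, blue if both are blue, and uncoloured otherwise. For $x,y,z\in\{b,u\}$, $T_{xyz}$ denotes the BNC of size $2$ (a triangle with vertices $1,2,3$) whose first edge $(1,2)$ has colour $x$, whose base $(1,3)$ has colour $y$, and whose second edge $(2,3)$ has colour $z$, where $b$ = blue and $u$ = uncoloured. The suboperad generated by a set is the smallest suboperad containing it. *)

theory Defs
  imports Main
begin

text \<open>A BNC of size n is represented by its size, its set of blue arcs and its set
  of red arcs.  Vertices are 1..n+1, an arc (i,j) has 1 <= i < j <= n+1.\<close>

datatype bnc = BNC nat "(nat \<times> nat) set" "(nat \<times> nat) set"

fun bsize :: "bnc \<Rightarrow> nat" where "bsize (BNC n B R) = n"
fun blues :: "bnc \<Rightarrow> (nat \<times> nat) set" where "blues (BNC n B R) = B"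
fun reds :: "bnc \<Rightarrow> (nat \<times> nat) set" where "reds (BNC n B R) = R"

definition arc_of :: "nat \<Rightarrow> nat \<times> nat \<Rightarrow> bool" where
  "arc_of n a \<longleftrightarrow> 1 \<le> fst a \<and> fst a < snd a \<and> snd a \<le> n + 1"

definition crossing :: "nat \<times> nat \<Rightarrow> nat \<times> nat \<Rightarrow> bool" where
  "crossing a c \<longleftrightarrow> (case a of (i, j) \<Rightarrow> case c of (k, l) \<Rightarrow>
       (i < k \<and> k < j \<and> j < l) \<or> (k < i \<and> i < l \<and> l < j))"

definition is_diagonal :: "nat \<Rightarrow> nat \<times> nat \<Rightarrow> bool" where
  "is_diagonal n a \<longleftrightarrow> arc_of n a \<and> snd a \<noteq> fst a + 1 \<and> a \<noteq> (1, n + 1)"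

definition is_bnc :: "bnc \<Rightarrow> bool" where
  "is_bnc C \<longleftrightarrow> (case C of BNC n B R \<Rightarrow>
     n \<ge> 1 \<and>
     (n = 1 \<longrightarrow> B = {(1, 2)} \<and> R = {}) \<and>
     (\<forall>a\<in>B \<union> R. arc_of n a) \<and> B \<inter> R = {} \<and>
     (\<forall>a\<in>R. is_diagonal n a) \<and>
     (\<forall>a\<in>B \<union> R. \<forall>c\<in>B \<union> R. \<not> crossing a c))"

definition bnc_unit :: bnc where
  "bnc_unit = BNC 1 {(1, 2)} {}"

text \<open>Partial composition C o_i D: glue the base of D on the i-th edge of C.\<close>
definition bnc_comp :: "bnc \<Rightarrow> nat \<Rightarrow> bnc \<Rightarrow> bnc" where
  "bnc_comp C i D =
    (let n = bsize C; m = bsize D;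
         \<sigma> = (\<lambda>v. if v \<le> i then v else v + m - 1);
         mapC = (\<lambda>S. {(\<sigma> a, \<sigma> b) | a b. (a, b) \<in> S \<and> (a, b) \<noteq> (i, i + 1)});
         mapD = (\<lambda>S. {(a + i - 1, b + i - 1) | a b. (a, b) \<in> S \<and> (a, b) \<noteq> (1, m + 1)});
         eC = (i, i + 1); bD = (1, m + 1);
         newB = (if eC \<in> blues C \<and> bD \<in> blues D then {(i, i + m)} else {});
         newR = (if eC \<notin> blues C \<union> reds C \<and> bD \<notin> blues D \<union> reds D
                 then {(i, i + m)} else {})
     in BNC (n + m - 1)
            (mapC (blues C) \<union> mapD (blues D) \<union> newB)
            (mapC (reds C) \<union> mapD (reds D) \<union> newR))"

text \<open>T_xyz: first edge (1,2) colour x, base (1,3) colour y, second edge (2,3) colour z.\<close>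
definition T_bbu :: bnc where "T_bbu = BNC 2 {(1, 2), (1, 3)} {}"
definition T_uub :: bnc where "T_uub = BNC 2 {(2, 3)} {}"

inductive_set generated_suboperad :: "bnc set \<Rightarrow> bnc set" for S where
  gen: "x \<in> S \<Longrightarrow> x \<in> generated_suboperad S"
| unit: "bnc_unit \<in> generated_suboperad S"
| comp: "x \<in> generated_suboperad S \<Longrightarrow> y \<in> generated_suboperad S \<Longrightarrow>
         1 \<le> i \<Longrightarrow> i \<le> bsize x \<Longrightarrow> bnc_comp x i y \<in> generated_suboperad S"

datatype lab = GP | GQ
datatype tree = Leaf | Node lab tree tree

fun arity :: "tree \<Rightarrow> nat" where
  "arity Leaf = 1"
| "arity (Node g l r) = arity l + arity r"

fun tcomp :: "tree \<Rightarrow> nat \<Rightarrow> tree \<Rightarrow> tree" where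
  "tcomp Leaf i s = (if i = 1 then s else Leaf)"
| "tcomp (Node g l r) i s =
     (if i \<le> arity l then Node g (tcomp l i s) r
      else Node g l (tcomp r (i - arity l) s))"

definition gp :: tree where "gp = Node GP Leaf Leaf"
definition gq :: tree where "gq = Node GQ Leaf Leaf"

inductive rels :: "tree \<Rightarrow> tree \<Rightarrow> bool" where
  "rels (tcomp (tcomp gp 2 gp) 2 gq) (tcomp (tcomp gp 1 gq) 1 gp)"
| "rels (tcomp (tcomp gq 2 gq) 2 gp) (tcomp (tcomp gq 1 gp) 1 gq)"

inductive op_cong :: "(tree \<Rightarrow> tree \<Rightarrow> bool) \<Rightarrow> tree \<Rightarrow> tree \<Rightarrow> bool" for \<rho> where
  base: "\<rho> t s \<Longrightarrow> op_cong \<rho> t s"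
| refl: "op_cong \<rho> t t"
| sym: "op_cong \<rho> t s \<Longrightarrow> op_cong \<rho> s t"
| trans: "op_cong \<rho> t s \<Longrightarrow> op_cong \<rho> s u \<Longrightarrow> op_cong \<rho> t u"
| compL: "op_cong \<rho> t t' \<Longrightarrow> 1 \<le> i \<Longrightarrow> i \<le> arity t \<Longrightarrow>
          op_cong \<rho> (tcomp t i s) (tcomp t' i s)"
| compR: "op_cong \<rho> s s' \<Longrightarrow> 1 \<le> i \<Longrightarrow> i \<le> arity t \<Longrightarrow>
          op_cong \<rho> (tcomp t i s) (tcomp t i s')"

text \<open>The operad morphism from the free operad to CNCB sending the generators to
  p = T_bbu and q = T_uub (Node g l r = (g o_2 r) o_1 l in the free operad).\<close>
fun gen_val :: "lab \<Rightarrow> bnc" where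
  "gen_val GP = T_bbu"
| "gen_val GQ = T_uub"

fun eval :: "tree \<Rightarrow> bnc" where
  "eval Leaf = bnc_unit"
| "eval (Node g l r) = bnc_comp (bnc_comp (gen_val g) 2 (eval r)) 1 (eval l)"

end

theory Submission
  imports Defs
begin

datatype col = Bl | Rd | Nc

fun typb :: "tree \<Rightarrow> bool" where
  "typb Leaf = True"
| "typb (Node g l r) = (g = GP)"

fun lvb :: "lab \<Rightarrow> bool" where
  "lvb GP = True" | "lvb GQ = False"

definition comb :: "bool \<Rightarrow> bool \<Rightarrow> col" where
  "comb e c = (if e \<and> c then Bl else if \<not> e \<and> \<not> c then Rd else Nc)"

fun colf :: "tree \<Rightarrow> nat \<Rightarrow> nat \<Rightarrow> col option" where
  "colf Leaf u v = None"
| "colf (Node g l r) u v =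
    (if u = 1 \<and> v = 1 + arity l then Some (comb (lvb g) (typb l))
     else if u = 1 + arity l \<and> v = 1 + arity l + arity r then Some (comb (\<not> lvb g) (typb r))
     else if v \<le> 1 + arity l then colf l u v
     else if 1 + arity l \<le> u then colf r (u - arity l) (v - arity l)
     else None)"

fun lvlp :: "bool \<Rightarrow> tree \<Rightarrow> bool list" where
  "lvlp c Leaf = [c]"
| "lvlp c (Node g l r) = lvlp (lvb g) l @ lvlp (\<not> lvb g) r"

lemma arity_pos: "1 \<le> arity t"
  by (induction t) auto

lemma arity_ne0[simp]: "arity t \<noteq> 0"
  using arity_pos[of t] by simp

lemma length_lvlp: "length (lvlp c t) = arity t"
  by (induction t arbitrary: c) auto

lemma arity_tcomp: "1 \<le> i \<Longrightarrow> i \<le> arity t \<Longrightarrow> arity (tcomp t i s) = arity t + arity s - 1"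
  by (induction t arbitrary: i) (auto simp: arity_pos)

lemma colf_range: "colf t u v = Some c \<Longrightarrow> 1 \<le> u \<and> u < v \<and> v \<le> arity t + 1 \<and> \<not> (u = 1 \<and> v = arity t + 1)"
proof (induction t arbitrary: u v)
  case Leaf then show ?case by simp
next
  case (Node g l r)
  have a: "1 \<le> arity l" "1 \<le> arity r" using arity_pos[of l] arity_pos[of r] by auto
  show ?case using Node.prems Node.IH(1)[of u v] Node.IH(2)[of "u - arity l" "v - arity l"] a
    by (auto split: if_splits)
qed

lemma arity_node: "t \<noteq> Leaf \<Longrightarrow> 2 \<le> arity t"
proof (cases t)
  case (Node g l r) then show ?thesis using arity_pos[of l] arity_pos[of r] by simp
qed simp

lemma colf_edge: "t \<noteq> Leaf \<Longrightarrow> 1 \<le> i \<Longrightarrow> i \<le> arity t \<Longrightarrow>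
   colf t i (Suc i) = Some (comb (lvlp c t ! (i - 1)) True)"
proof (induction t arbitrary: i c)
  case Leaf then show ?case by simp
next
  case (Node g l r)
  show ?case
  proof (cases "i \<le> arity l")
    case True
    show ?thesis
    proof (cases "l = Leaf")
      case True then show ?thesis using \<open>i \<le> arity l\<close> Node by simp
    next
      case False
      have "colf (Node g l r) i (Suc i) = colf l i (Suc i)"
        using arity_node[OF False] True Node.prems by auto
      then show ?thesis using True Node.IH(1)[of i "lvb g"] Node.prems False
        by (auto simp: nth_append length_lvlp)
    qed
  next
    case False
    show ?thesis
    proof (cases "r = Leaf")
      case True then show ?thesis using False Node.prems by (auto simp: nth_append length_lvlp)
    next
      case F2: False
      have "colf (Node g l r) i (Suc i) = colf r (i - arity l) (Suc i - arity l)"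
        using arity_node[OF F2] False Node.prems by auto
      moreover have "Suc i - arity l = Suc (i - arity l)" using False by simp
      ultimately show ?thesis using False Node.IH(2)[of "i - arity l" "\<not> lvb g"] Node.prems F2
        by (auto simp: nth_append length_lvlp)
    qed
  qed
qed

lemma colf_none_ge: "v \<le> u \<Longrightarrow> colf t u v = None"
  using colf_range[of t u v] by (cases "colf t u v") auto

lemma N1: "colf (Node g l r) 1 (Suc (arity l)) = Some (comb (lvb g) (typb l))"
  by simp
lemma N2: "colf (Node g l r) (Suc (arity l)) (Suc (arity l + arity r)) = Some (comb (\<not> lvb g) (typb r))"
  by simp
lemma N3: "v \<le> Suc (arity l) \<Longrightarrow> \<not> (u = 1 \<and> v = Suc (arity l)) \<Longrightarrow> colf (Node g l r) u v = colf l u v"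
  by auto
lemma N4: "Suc (arity l) \<le> u \<Longrightarrow> \<not> (u = Suc (arity l) \<and> v = Suc (arity l + arity r)) \<Longrightarrow>
   colf (Node g l r) u v = colf r (u - arity l) (v - arity l)"
  using colf_none_ge[of v u l] colf_none_ge[of "v - arity l" "u - arity l" r] by auto
lemma N5: "u < Suc (arity l) \<Longrightarrow> Suc (arity l) < v \<Longrightarrow> colf (Node g l r) u v = None"
  by auto

lemma N1': "u = 1 \<Longrightarrow> v = Suc (arity l) \<Longrightarrow> colf (Node g l r) u v = Some (comb (lvb g) (typb l))"
  by simp
lemma N2': "u = Suc (arity l) \<Longrightarrow> v = Suc (arity l + arity r) \<Longrightarrow> colf (Node g l r) u v = Some (comb (\<not> lvb g) (typb r))"
  by simp

lemma colf_u0[simp]: "colf t 0 v = None"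
  using colf_range[of t 0 v] by (cases "colf t 0 v") auto

lemma colf_big: "arity t + 1 < v \<Longrightarrow> colf t u v = None"
  using colf_range[of t u v] by (cases "colf t u v") auto

declare colf.simps(2)[simp del]

lemma lvlp_node: "t \<noteq> Leaf \<Longrightarrow> lvlp c t = lvlp d t"
  by (cases t) auto

lemma typb_tcomp: "typb (tcomp t i s) = (if t = Leaf \<and> i = 1 then typb s else typb t)"
  by (cases t) auto

definition ctc :: "tree \<Rightarrow> tree \<Rightarrow> nat \<Rightarrow> nat \<Rightarrow> nat \<Rightarrow> col option" where
 "ctc t s i u v =
  (if u = i \<and> v = i + arity s then (if t = Leaf then None else Some (comb (lvlp True t ! (i-1)) (typb s)))
   else if i \<le> u \<and> v \<le> i + arity s then colf s (u + 1 - i) (v + 1 - i)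
   else if u \<le> i \<and> i + arity s \<le> v then colf t u (v + 1 - arity s)
   else if i + arity s \<le> u then colf t (u + 1 - arity s) (v + 1 - arity s)
   else if v \<le> i then colf t u v
   else None)"

lemma ctc_cases:
  assumes "u = i \<and> v = i + arity s \<Longrightarrow> Q (if t = Leaf then None else Some (comb (lvlp True t ! (i-1)) (typb s)))"
  and "\<not>(u = i \<and> v = i + arity s) \<Longrightarrow> i \<le> u \<Longrightarrow> v \<le> i + arity s \<Longrightarrow> Q (colf s (u + 1 - i) (v + 1 - i))"
  and "\<not>(u = i \<and> v = i + arity s) \<Longrightarrow> \<not>(i \<le> u \<and> v \<le> i + arity s) \<Longrightarrow> u \<le> i \<Longrightarrow> i + arity s \<le> v
         \<Longrightarrow> Q (colf t u (v + 1 - arity s))"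
  and "\<not>(u = i \<and> v = i + arity s) \<Longrightarrow> \<not>(i \<le> u \<and> v \<le> i + arity s) \<Longrightarrow> \<not>(u \<le> i \<and> i + arity s \<le> v)
         \<Longrightarrow> i + arity s \<le> u \<Longrightarrow> Q (colf t (u + 1 - arity s) (v + 1 - arity s))"
  and "\<not>(u = i \<and> v = i + arity s) \<Longrightarrow> \<not>(i \<le> u \<and> v \<le> i + arity s) \<Longrightarrow> \<not>(u \<le> i \<and> i + arity s \<le> v)
         \<Longrightarrow> \<not> i + arity s \<le> u \<Longrightarrow> v \<le> i \<Longrightarrow> Q (colf t u v)"
  and "\<not>(u = i \<and> v = i + arity s) \<Longrightarrow> \<not>(i \<le> u \<and> v \<le> i + arity s) \<Longrightarrow> \<not>(u \<le> i \<and> i + arity s \<le> v)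
         \<Longrightarrow> \<not> i + arity s \<le> u \<Longrightarrow> \<not> v \<le> i \<Longrightarrow> Q None"
  shows "Q (ctc t s i u v)"
  unfolding ctc_def using assms by auto

lemma ctc_b1: "u = i \<Longrightarrow> v = i + arity s \<Longrightarrow> ctc t s i u v = (if t = Leaf then None else Some (comb (lvlp True t ! (i-1)) (typb s)))"
  unfolding ctc_def by auto
lemma ctc_b2: "\<not>(u = i \<and> v = i + arity s) \<Longrightarrow> i \<le> u \<Longrightarrow> v \<le> i + arity s \<Longrightarrow> ctc t s i u v = colf s (u + 1 - i) (v + 1 - i)"
  unfolding ctc_def by auto
lemma ctc_b3: "\<not>(u = i \<and> v = i + arity s) \<Longrightarrow> \<not>(i \<le> u \<and> v \<le> i + arity s) \<Longrightarrow> u \<le> i \<Longrightarrow> i + arity s \<le> v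
         \<Longrightarrow> ctc t s i u v = colf t u (v + 1 - arity s)"
  unfolding ctc_def by auto
lemma ctc_b4: "\<not>(u = i \<and> v = i + arity s) \<Longrightarrow> \<not>(i \<le> u \<and> v \<le> i + arity s) \<Longrightarrow> \<not>(u \<le> i \<and> i + arity s \<le> v)
         \<Longrightarrow> i + arity s \<le> u \<Longrightarrow> ctc t s i u v = colf t (u + 1 - arity s) (v + 1 - arity s)"
  unfolding ctc_def by auto
lemma ctc_b5: "\<not>(u = i \<and> v = i + arity s) \<Longrightarrow> \<not>(i \<le> u \<and> v \<le> i + arity s) \<Longrightarrow> \<not>(u \<le> i \<and> i + arity s \<le> v)
         \<Longrightarrow> \<not> i + arity s \<le> u \<Longrightarrow> v \<le> i \<Longrightarrow> ctc t s i u v = colf t u v"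
  unfolding ctc_def by auto
lemma ctc_b6: "\<not>(u = i \<and> v = i + arity s) \<Longrightarrow> \<not>(i \<le> u \<and> v \<le> i + arity s) \<Longrightarrow> \<not>(u \<le> i \<and> i + arity s \<le> v)
         \<Longrightarrow> \<not> i + arity s \<le> u \<Longrightarrow> \<not> v \<le> i \<Longrightarrow> ctc t s i u v = None"
  unfolding ctc_def by auto

lemma colf_tcomp: "1 \<le> i \<Longrightarrow> i \<le> arity t \<Longrightarrow> colf (tcomp t i s) u v = ctc t s i u v"
proof (induction t arbitrary: i u v)
  case Leaf
  then show ?case using colf_range[of s u v] unfolding ctc_def by (cases "colf s u v") auto
next
  case (Node g l r)
  define a where "a = arity l"
  define m where "m = arity s"
  define b where "b = arity r"
  have a1: "1 \<le> a" "1 \<le> m" "1 \<le> b" unfolding a_def m_def b_def using arity_pos by auto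
  show ?case
  proof (cases "i \<le> arity l")
    case True
    have e: "tcomp (Node g l r) i s = Node g (tcomp l i s) r" using True by simp
    have ar: "arity (tcomp l i s) = a + m - 1" using arity_tcomp Node.prems True a_def m_def by auto
    show ?thesis
    proof (cases "l = Leaf")
      case True
      have i1: "i = 1" "a = 1" using \<open>i \<le> arity l\<close> Node.prems True a_def by auto
      have e1: "tcomp (Node g l r) i s = Node g s r" using True i1 by simp
      have lv1: "lvlp True (Node g l r) ! 0 = lvb g" using True by simp
      consider "u = 1 \<and> v = 1 + m" | "u = 1 + m \<and> v = 1 + m + b"
        | "v \<le> 1 + m \<and> \<not> (u = 1 \<and> v = 1 + m)" | "1 + m \<le> u \<and> \<not> (u = 1 + m \<and> v = 1 + m + b)"
        | "u < 1 + m \<and> 1 + m < v" by linarith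
      then show ?thesis
      proof cases
        case 1
        then show ?thesis unfolding e1 ctc_def using a1 i1 lv1 True
          by (auto simp: a_def m_def b_def N1')
      next
        case 2
        then show ?thesis unfolding e1 ctc_def using a1 i1 lv1 True
          by (auto simp: a_def m_def b_def N2')
      next
        case 3
        have "colf (Node g s r) u v = colf s u v"
          by (rule N3) (use 3 in \<open>auto simp: m_def\<close>)
        also have "\<dots> = ctc (Node g l r) s i u v"
        proof (rule ctc_cases[where Q = "\<lambda>x. colf s u v = x"], goal_cases)
          case 1 then show ?case using 3 i1 by (auto simp: m_def)
        next
          case 2 then show ?case using i1 by simp
        next
          case 3
          then have "u = 0" using \<open>v \<le> 1 + m \<and> \<not> (u = 1 \<and> v = 1 + m)\<close> i1 by (auto simp: m_def)
          then show ?case by simp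
        next
          case 4 then show ?case using \<open>v \<le> 1 + m \<and> \<not> (u = 1 \<and> v = 1 + m)\<close> i1
            by (auto simp: m_def colf_none_ge)
        next
          case 5 then have "u = 0" using i1 by auto
          then show ?case by simp
        next
          case 6
          then have "u = 0" using \<open>v \<le> 1 + m \<and> \<not> (u = 1 \<and> v = 1 + m)\<close> i1 by (auto simp: m_def)
          then show ?case by simp
        qed
        finally show ?thesis unfolding e1 .
      next
        case 4
        have "colf (Node g s r) u v = colf r (u - m) (v - m)"
          unfolding m_def by (rule N4) (use 4 in \<open>auto simp: m_def b_def\<close>)
        also have "\<dots> = ctc (Node g l r) s i u v"
        proof (rule ctc_cases[where Q = "\<lambda>x. colf r (u - m) (v - m) = x"], goal_cases)
          case 1 then show ?case using 4 i1 a1 by (auto simp: m_def)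
        next
          case 2 then show ?case using 4 i1 by (auto simp: m_def colf_none_ge)
        next
          case 3 then show ?case using 4 i1 a1 by (auto simp: m_def)
        next
          case c: 4
          have "colf (Node g l r) (u + 1 - m) (v + 1 - m) = colf r (u + 1 - m - a) (v + 1 - m - a)"
            unfolding a_def by (rule N4) (use 4 i1 a1 in \<open>auto simp: a_def m_def b_def\<close>)
          then show ?case using i1 by (simp add: m_def)
        next
          case 5 then show ?case using 4 i1 by (auto simp: m_def)
        next
          case 6 then show ?case using 4 i1 by (auto simp: m_def)
        qed
        finally show ?thesis unfolding e1 .
      next
        case 5
        have "colf (Node g s r) u v = None"
          by (rule N5) (use 5 in \<open>auto simp: m_def\<close>)
        also have "\<dots> = ctc (Node g l r) s i u v"
        proof (rule ctc_cases[where Q = "\<lambda>x. None = x"], goal_cases)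
          case 1 then show ?case using 5 i1 by (auto simp: m_def)
        next
          case 2 then show ?case using 5 i1 by (auto simp: m_def)
        next
          case 3 then show ?case using 5 i1 a1 by (auto simp: a_def m_def intro!: N5[symmetric])
        next
          case 4 then show ?case using 5 i1 by (auto simp: m_def)
        next
          case 5 then show ?case using \<open>u < 1 + m \<and> 1 + m < v\<close> i1 by auto
        next
          case 6 then show ?case by simp
        qed
        finally show ?thesis unfolding e1 .
      qed
    next
      case False
      have a2: "2 \<le> a" using arity_node[OF False] a_def by simp
      have IH: "colf (tcomp l i s) x y = ctc l s i x y" for x y using Node.IH(1)[of i x y] Node.prems True by auto
      have lv: "lvlp True (Node g l r) ! (i - 1) = lvlp True l ! (i - 1)"
      proof -
        have "i - 1 < length (lvlp (lvb g) l)" using True Node.prems by (simp add: length_lvlp)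
        then show ?thesis using lvlp_node[OF False, of "lvb g" True] by (simp add: nth_append)
      qed
      have tl: "typb (tcomp l i s) = typb l" using False typb_tcomp by simp
      consider "u = 1 \<and> v = a + m" | "u = a + m \<and> v = a + m + b"
        | "v \<le> a + m \<and> \<not> (u = 1 \<and> v = a + m)" | "a + m \<le> u \<and> \<not> (u = a + m \<and> v = a + m + b)"
        | "u < a + m \<and> a + m < v" by linarith
      then show ?thesis
      proof cases
        case 1
        then show ?thesis unfolding e ctc_def using a1 a2 True Node.prems ar tl
          by (auto simp: a_def m_def b_def N1' N2')
      next
        case 2
        then show ?thesis unfolding e ctc_def using a1 a2 True Node.prems ar tl
          by (auto simp: a_def m_def b_def N1' N2')
      next
        case 3
        have "colf (Node g (tcomp l i s) r) u v = colf (tcomp l i s) u v"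
          by (rule N3) (use 3 ar a1 in auto)
        also have "\<dots> = ctc l s i u v" by (rule IH)
        also have "\<dots> = ctc (Node g l r) s i u v"
        proof (rule ctc_cases[where Q = "\<lambda>x. ctc l s i u v = x"], goal_cases)
          case 1 then show ?case using lv False by (simp add: ctc_def)
        next
          case 2 then show ?case by (auto simp: ctc_def)
        next
          case 3
          have "ctc l s i u v = colf l u (v + 1 - arity s)" using 3 unfolding ctc_def by auto
          moreover have "colf (Node g l r) u (v + 1 - arity s) = colf l u (v + 1 - arity s)"
            by (rule N3) (use 3 \<open>v \<le> a + m \<and> \<not> (u = 1 \<and> v = a + m)\<close> a1 a2 in \<open>auto simp: a_def m_def\<close>)
          ultimately show ?case by simp
        next
          case 4
          have "ctc l s i u v = colf l (u + 1 - arity s) (v + 1 - arity s)" using 4 unfolding ctc_def by auto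
          moreover have "colf (Node g l r) (u + 1 - arity s) (v + 1 - arity s) = colf l (u + 1 - arity s) (v + 1 - arity s)"
            by (rule N3) (use 4 \<open>v \<le> a + m \<and> \<not> (u = 1 \<and> v = a + m)\<close> a1 a2 Node.prems in \<open>auto simp: a_def m_def\<close>)
          ultimately show ?case by simp
        next
          case 5
          have "ctc l s i u v = colf l u v" using 5 unfolding ctc_def by auto
          moreover have "colf (Node g l r) u v = colf l u v"
            by (rule N3) (use 5 \<open>v \<le> a + m \<and> \<not> (u = 1 \<and> v = a + m)\<close> a1 a2 True in \<open>auto simp: a_def m_def\<close>)
          ultimately show ?case by simp
        next
          case 6 then show ?case by (auto simp: ctc_def)
        qed
        finally show ?thesis unfolding e .
      next
        case 4
        have "colf (Node g (tcomp l i s) r) u v = colf r (u - (a + m - 1)) (v - (a + m - 1))"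
          using N4[where l="tcomp l i s" and u=u and v=v and g=g and r=r] 4 ar a1 a2 by (simp add: b_def)
        also have "\<dots> = ctc (Node g l r) s i u v"
        proof (rule ctc_cases[where Q = "\<lambda>x. colf r (u - (a + m - 1)) (v - (a + m - 1)) = x"], goal_cases)
          case 1 then show ?case using 4 True a_def m_def a1 by auto
        next
          case 2 then show ?case using 4 True a1 colf_none_ge by (simp add: a_def m_def)
        next
          case 3 then show ?case using 4 True a_def m_def a1 by auto
        next
          case c: 4
          have "colf (Node g l r) (u + 1 - arity s) (v + 1 - arity s) = colf r (u + 1 - arity s - arity l) (v + 1 - arity s - arity l)"
            by (rule N4) (use 4 a1 in \<open>auto simp: a_def m_def b_def\<close>)
          then show ?case using 4 a1 by (simp add: a_def m_def add.commute)
        next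
          case 5 then show ?case using 4 True a_def m_def a1 by auto
        next
          case 6 then show ?case using 4 True a_def m_def a1 by auto
        qed
        finally show ?thesis unfolding e .
      next
        case 5
        have "colf (Node g (tcomp l i s) r) u v = None"
          using N5[where l="tcomp l i s" and u=u and v=v and g=g and r=r] 5 ar a1 a2 by simp
        also have "\<dots> = ctc (Node g l r) s i u v"
        proof (rule ctc_cases[where Q = "\<lambda>x. None = x"], goal_cases)
          case 1 then show ?case using 5 True a_def m_def a1 by auto
        next
          case 2 then show ?case using 5 True a_def m_def a1 by auto
        next
          case 3 then show ?case using 5 True a1 Node.prems by (auto simp: a_def m_def intro!: N5[symmetric])
        next
          case 4 then show ?case using 5 True a1 Node.prems by (auto simp: a_def m_def intro!: N5[symmetric])
        next
          case 5 then show ?case using \<open>u < a + m \<and> a + m < v\<close> True a_def m_def by auto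
        next
          case 6 then show ?case by simp
        qed
        finally show ?thesis unfolding e .
      qed
    qed
  next
    case False
    have ia: "a + 1 \<le> i" "i \<le> a + b" using False Node.prems a_def b_def by auto
    have e: "tcomp (Node g l r) i s = Node g l (tcomp r (i - a) s)" using False a_def by simp
    show ?thesis
    proof (cases "r = Leaf")
      case True
      have i1: "i = a + 1" "b = 1" using ia True b_def by auto
      have e1: "tcomp (Node g l r) i s = Node g l s" using e True i1 by simp
      have lv1: "lvlp True (Node g l r) ! (i - 1) = (\<not> lvb g)" using True i1 a_def
        by (simp add: nth_append length_lvlp)
      consider "u = 1 \<and> v = 1 + a" | "u = 1 + a \<and> v = 1 + a + m"
        | "v \<le> 1 + a \<and> \<not> (u = 1 \<and> v = 1 + a)" | "1 + a \<le> u \<and> \<not> (u = 1 + a \<and> v = 1 + a + m)"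
        | "u < 1 + a \<and> 1 + a < v" by linarith
      then show ?thesis
      proof cases
        case 1
        have "colf (Node g l s) u v = Some (comb (lvb g) (typb l))" using 1 by (simp add: a_def N1')
        also have "\<dots> = ctc (Node g l r) s i u v"
        proof (rule ctc_cases[where Q = "\<lambda>x. Some (comb (lvb g) (typb l)) = x"], goal_cases)
          case 5 then show ?case using 1 by (simp add: a_def N1')
        qed (use 1 i1 a1 in \<open>auto simp: m_def\<close>)
        finally show ?thesis unfolding e1 .
      next
        case 2
        have "colf (Node g l s) u v = Some (comb (\<not> lvb g) (typb s))" using 2 by (simp add: a_def m_def N2')
        also have "\<dots> = ctc (Node g l r) s i u v"
          using 2 i1 lv1 True unfolding ctc_def by (auto simp: m_def)
        finally show ?thesis unfolding e1 .
      next
        case 3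
        have "colf (Node g l s) u v = colf l u v"
          by (rule N3) (use 3 in \<open>auto simp: a_def\<close>)
        also have "\<dots> = ctc (Node g l r) s i u v"
        proof (rule ctc_cases[where Q = "\<lambda>x. colf l u v = x"], goal_cases)
          case 1 then show ?case using 3 i1 a1 by (auto simp: m_def)
        next
          case 2 then show ?case using 3 i1 by (auto simp: colf_none_ge)
        next
          case 3 then show ?case using \<open>v \<le> 1 + a \<and> \<not> (u = 1 \<and> v = 1 + a)\<close> i1 a1 by (auto simp: m_def)
        next
          case 4 then show ?case using \<open>v \<le> 1 + a \<and> \<not> (u = 1 \<and> v = 1 + a)\<close> i1 a1
            by (auto simp: m_def colf_none_ge)
        next
          case 5 then show ?case using \<open>v \<le> 1 + a \<and> \<not> (u = 1 \<and> v = 1 + a)\<close>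
            by (auto simp: a_def intro!: N3[symmetric])
        next
          case 6 then show ?case using \<open>v \<le> 1 + a \<and> \<not> (u = 1 \<and> v = 1 + a)\<close> i1 by auto
        qed
        finally show ?thesis unfolding e1 .
      next
        case 4
        have "colf (Node g l s) u v = colf s (u - a) (v - a)"
          unfolding a_def by (rule N4) (use 4 in \<open>auto simp: a_def m_def\<close>)
        also have "\<dots> = ctc (Node g l r) s i u v"
        proof (rule ctc_cases[where Q = "\<lambda>x. colf s (u - a) (v - a) = x"], goal_cases)
          case 1 then show ?case using 4 i1 a1 by (auto simp: m_def)
        next
          case 2 then show ?case using 4 i1 by auto
        next
          case 3
          have "colf (Node g l r) u (v + 1 - arity s) = colf r (u - a) (v + 1 - arity s - a)"
            unfolding a_def by (rule N4) (use 3 4 i1 a1 in \<open>auto simp: a_def m_def b_def\<close>)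
          moreover have "colf s (u - a) (v - a) = None"
            by (rule colf_big) (use 3 4 i1 in \<open>auto simp: m_def\<close>)
          ultimately show ?case using True by simp
        next
          case 4
          have "colf (Node g l r) (u + 1 - arity s) (v + 1 - arity s) = colf r (u + 1 - arity s - a) (v + 1 - arity s - a)"
            unfolding a_def by (rule N4) (use 4 \<open>1 + a \<le> u \<and> \<not> (u = 1 + a \<and> v = 1 + a + m)\<close> i1 a1 in \<open>auto simp: a_def m_def b_def\<close>)
          moreover have "colf s (u - a) (v - a) = None"
            using 4 i1 colf_range[of s "u - a" "v - a"] by (cases "colf s (u - a) (v - a)") (auto simp: m_def)
          ultimately show ?case using True by simp
        next
          case 5 then show ?case using 4 i1 by (auto simp: colf_none_ge)
        next
          case 6
          have "colf s (u - a) (v - a) = None"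
            by (rule colf_big) (use 6 4 i1 in \<open>auto simp: m_def\<close>)
          then show ?case by simp
        qed
        finally show ?thesis unfolding e1 .
      next
        case 5
        note R5 = this
        have "colf (Node g l s) u v = None"
          by (rule N5) (use 5 in \<open>auto simp: a_def\<close>)
        also have "\<dots> = ctc (Node g l r) s i u v"
        proof (rule ctc_cases[where Q = "\<lambda>x. None = x"], goal_cases)
          case 3 then show ?case using 5 i1 a1 by (auto simp: a_def m_def intro!: N5[symmetric])
        next
          case 5 then show ?case using R5 i1 a1 by (auto simp: a_def m_def intro!: N5[symmetric])
        qed (use 5 i1 a1 in \<open>auto simp: m_def\<close>)
        finally show ?thesis unfolding e1 .
      qed
    next
      case False
      have b2: "2 \<le> b" using arity_node[OF False] b_def by simp
      have IH: "colf (tcomp r (i - a) s) x y = ctc r s (i - a) x y" for x y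
        using Node.IH(2)[of "i - a" x y] ia b_def by auto
      have ar: "arity (tcomp r (i - a) s) = b + m - 1" using arity_tcomp ia b_def m_def by auto
      have tr: "typb (tcomp r (i - a) s) = typb r" using False typb_tcomp by simp
      have lv: "lvlp True (Node g l r) ! (i - 1) = lvlp True r ! (i - a - 1)"
      proof -
        have "\<not> i - 1 < length (lvlp (lvb g) l)" using ia a_def by (simp add: length_lvlp)
        then show ?thesis using lvlp_node[OF False, of "\<not> lvb g" True] ia a_def
          by (simp add: nth_append length_lvlp)
      qed
      consider "u = 1 \<and> v = 1 + a" | "u = 1 + a \<and> v = a + b + m"
        | "v \<le> 1 + a \<and> \<not> (u = 1 \<and> v = 1 + a)" | "1 + a \<le> u \<and> \<not> (u = 1 + a \<and> v = a + b + m)"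
        | "u < 1 + a \<and> 1 + a < v" by linarith
      then show ?thesis
      proof cases
        case 1
        have "colf (Node g l (tcomp r (i - a) s)) u v = Some (comb (lvb g) (typb l))" using 1 by (simp add: a_def N1')
        also have "\<dots> = ctc (Node g l r) s i u v"
        proof (rule ctc_cases[where Q = "\<lambda>x. Some (comb (lvb g) (typb l)) = x"], goal_cases)
          case 5 then show ?case using 1 by (simp add: a_def N1')
        qed (use 1 ia a1 in \<open>auto simp: m_def\<close>)
        finally show ?thesis unfolding e .
      next
        case 2
        have "colf (Node g l (tcomp r (i - a) s)) u v = Some (comb (\<not> lvb g) (typb r))"
          using 2 ar tr a1 by (simp add: a_def N2')
        also have "\<dots> = ctc (Node g l r) s i u v"
        proof (rule ctc_cases[where Q = "\<lambda>x. Some (comb (\<not> lvb g) (typb r)) = x"], goal_cases)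
          case 3 then show ?case using 2 a1 by (simp add: a_def b_def m_def N2')
        qed (use 2 ia a1 b2 in \<open>auto simp: m_def\<close>)
        finally show ?thesis unfolding e .
      next
        case 3
        have "colf (Node g l (tcomp r (i - a) s)) u v = colf l u v"
          by (rule N3) (use 3 in \<open>auto simp: a_def\<close>)
        also have "\<dots> = ctc (Node g l r) s i u v"
        proof (rule ctc_cases[where Q = "\<lambda>x. colf l u v = x"], goal_cases)
          case 1 then show ?case using 3 ia a1 by (auto simp: m_def)
        next
          case 2 then show ?case using 3 ia by (auto simp: colf_none_ge)
        next
          case 3 then show ?case using \<open>v \<le> 1 + a \<and> \<not> (u = 1 \<and> v = 1 + a)\<close> ia a1 by (auto simp: m_def)
        next
          case 4 then show ?case using \<open>v \<le> 1 + a \<and> \<not> (u = 1 \<and> v = 1 + a)\<close> ia a1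
            by (auto simp: m_def colf_none_ge)
        next
          case 5 then show ?case using \<open>v \<le> 1 + a \<and> \<not> (u = 1 \<and> v = 1 + a)\<close>
            by (auto simp: a_def intro!: N3[symmetric])
        next
          case 6 then show ?case using \<open>v \<le> 1 + a \<and> \<not> (u = 1 \<and> v = 1 + a)\<close> ia by auto
        qed
        finally show ?thesis unfolding e .
      next
        case 4
        have "colf (Node g l (tcomp r (i - a) s)) u v = colf (tcomp r (i - a) s) (u - a) (v - a)"
          unfolding a_def by (rule N4) (use 4 ar a1 in \<open>auto simp: a_def m_def b_def\<close>)
        also have "\<dots> = ctc r s (i - a) (u - a) (v - a)" by (rule IH)
        also have "\<dots> = ctc (Node g l r) s i u v"
        proof (rule ctc_cases[where Q = "\<lambda>x. ctc r s (i - a) (u - a) (v - a) = x"], goal_cases)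
          case c: 1
          have "ctc r s (i - a) (u - a) (v - a) = (if r = Leaf then None else Some (comb (lvlp True r ! (i - a - 1)) (typb s)))"
            by (rule ctc_b1) (use c 4 ia in auto)
          then show ?case using lv False by simp
        next
          case c: 2
          have "ctc r s (i - a) (u - a) (v - a) = colf s (u - a + 1 - (i - a)) (v - a + 1 - (i - a))"
            by (rule ctc_b2) (use c 4 ia in auto)
          moreover have "u - a + 1 - (i - a) = u + 1 - i" "v - a + 1 - (i - a) = v + 1 - i" using c 4 ia by auto
          ultimately show ?case by simp
        next
          case c: 3
          have "colf (Node g l r) u (v + 1 - arity s) = colf r (u - a) (v + 1 - arity s - a)"
            unfolding a_def by (rule N4) (use c 4 ia a1 in \<open>auto simp: a_def m_def b_def\<close>)
          moreover have "ctc r s (i - a) (u - a) (v - a) = colf r (u - a) (v - a + 1 - arity s)"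
            by (rule ctc_b3) (use c 4 ia in auto)
          moreover have "v + 1 - arity s - a = v - a + 1 - arity s" using c 4 ia by auto
          ultimately show ?case by simp
        next
          case c: 4
          have "colf (Node g l r) (u + 1 - arity s) (v + 1 - arity s) = colf r (u + 1 - arity s - a) (v + 1 - arity s - a)"
            unfolding a_def by (rule N4) (use c 4 ia a1 in \<open>auto simp: a_def m_def b_def\<close>)
          moreover have "ctc r s (i - a) (u - a) (v - a) = colf r (u - a + 1 - arity s) (v - a + 1 - arity s)"
            by (rule ctc_b4) (use c 4 ia in auto)
          moreover have "v + 1 - arity s - a = v - a + 1 - arity s" "u + 1 - arity s - a = u - a + 1 - arity s"
            using c 4 ia a1 by (auto simp: m_def)
          ultimately show ?case by simp
        next
          case c: 5
          have "colf (Node g l r) u v = colf r (u - a) (v - a)"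
            unfolding a_def by (rule N4) (use c 4 ia a1 in \<open>auto simp: a_def m_def b_def\<close>)
          moreover have "ctc r s (i - a) (u - a) (v - a) = colf r (u - a) (v - a)"
            by (rule ctc_b5) (use c 4 ia in auto)
          ultimately show ?case by simp
        next
          case c: 6
          show ?case by (rule ctc_b6) (use c 4 ia in auto)
        qed
        finally show ?thesis unfolding e .
      next
        case 5
        note R5 = this
        have "colf (Node g l (tcomp r (i - a) s)) u v = None"
          by (rule N5) (use 5 in \<open>auto simp: a_def\<close>)
        also have "\<dots> = ctc (Node g l r) s i u v"
        proof (rule ctc_cases[where Q = "\<lambda>x. None = x"], goal_cases)
          case 3 then show ?case using 5 ia a1 by (auto simp: a_def m_def intro!: N5[symmetric])
        next
          case 5 then show ?case using R5 ia a1 by (auto simp: a_def m_def intro!: N5[symmetric])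
        qed (use 5 ia a1 in \<open>auto simp: m_def\<close>)
        finally show ?thesis unfolding e .
      qed
    qed
  qed
qed

definition CS :: "tree \<Rightarrow> col \<Rightarrow> (nat \<times> nat) set" where
  "CS t c = {(u, v). colf t u v = Some c}"

definition sig :: "nat \<Rightarrow> nat \<Rightarrow> nat \<Rightarrow> nat" where
  "sig i m x = (if x \<le> i then x else x + m - 1)"

definition mapC :: "nat \<Rightarrow> nat \<Rightarrow> (nat \<times> nat) set \<Rightarrow> (nat \<times> nat) set" where
  "mapC i m S = {(sig i m a, sig i m b) | a b. (a, b) \<in> S \<and> (a, b) \<noteq> (i, i + 1)}"

definition mapD :: "nat \<Rightarrow> nat \<Rightarrow> (nat \<times> nat) set \<Rightarrow> (nat \<times> nat) set" where
  "mapD i m S = {(a + i - 1, b + i - 1) | a b. (a, b) \<in> S \<and> (a, b) \<noteq> (1, m + 1)}"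

lemma CS_tcomp_sub:
  assumes i: "1 \<le> i" "i \<le> arity t" and tn: "t \<noteq> Leaf"
  shows "CS (tcomp t i s) c \<subseteq> mapC i (arity s) (CS t c) \<union> mapD i (arity s) (CS s c)
          \<union> (if comb (lvlp True t ! (i - 1)) (typb s) = c then {(i, i + arity s)} else {})"
proof
  fix x assume "x \<in> CS (tcomp t i s) c"
  then obtain u v where x: "x = (u, v)" and h: "ctc t s i u v = Some c"
    unfolding CS_def using colf_tcomp[OF i] by auto
  have m1: "1 \<le> arity s" using arity_pos by simp
  show "x \<in> mapC i (arity s) (CS t c) \<union> mapD i (arity s) (CS s c)
          \<union> (if comb (lvlp True t ! (i - 1)) (typb s) = c then {(i, i + arity s)} else {})"
  proof (rule ctc_cases[where Q = "\<lambda>y. y = Some c \<longrightarrow> x \<in> mapC i (arity s) (CS t c) \<union> mapD i (arity s) (CS s c)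
          \<union> (if comb (lvlp True t ! (i - 1)) (typb s) = c then {(i, i + arity s)} else {})", rule_format, OF _ _ _ _ _ _ h],
         goal_cases)
    case 1 then show ?case using tn x by auto
  next
    case 2
    then have r: "1 \<le> u + 1 - i" "u + 1 - i < v + 1 - i" using colf_range[of s "u + 1 - i" "v + 1 - i" c] by auto
    have "(u, v) = ((u + 1 - i) + i - 1, (v + 1 - i) + i - 1)" using 2 r by auto
    moreover have "(u + 1 - i, v + 1 - i) \<noteq> (1, arity s + 1)" using 2 r by auto
    ultimately have "x \<in> mapD i (arity s) (CS s c)" using 2 x unfolding mapD_def CS_def by blast
    then show ?case by blast
  next
    case 3
    have "(u, v) = (sig i (arity s) u, sig i (arity s) (v + 1 - arity s))" using 3 m1 unfolding sig_def by auto
    moreover have "(u, v + 1 - arity s) \<noteq> (i, i + 1)" using 3 by auto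
    ultimately have "x \<in> mapC i (arity s) (CS t c)" using 3 x unfolding mapC_def CS_def by blast
    then show ?case by blast
  next
    case 4
    have vv: "u < v" using 4 colf_range[of t "u + 1 - arity s" "v + 1 - arity s" c] by auto
    have "(u, v) = (sig i (arity s) (u + 1 - arity s), sig i (arity s) (v + 1 - arity s))"
      using 4 m1 vv i unfolding sig_def by auto
    moreover have "(u + 1 - arity s, v + 1 - arity s) \<noteq> (i, i + 1)" using 4 m1 i by auto
    ultimately have "x \<in> mapC i (arity s) (CS t c)" using 4 x unfolding mapC_def CS_def by blast
    then show ?case by blast
  next
    case 5
    have "(u, v) = (sig i (arity s) u, sig i (arity s) v)"
      using 5 colf_range[of t u v c] unfolding sig_def by auto
    moreover have "(u, v) \<noteq> (i, i + 1)" using 5 by auto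
    ultimately have "x \<in> mapC i (arity s) (CS t c)" using 5 x unfolding mapC_def CS_def by blast
    then show ?case by blast
  next
    case 6 then show ?case by simp
  qed
qed

lemma CS_tcomp_sup:
  assumes i: "1 \<le> i" "i \<le> arity t" and tn: "t \<noteq> Leaf"
  shows "mapC i (arity s) (CS t c) \<union> mapD i (arity s) (CS s c)
          \<union> (if comb (lvlp True t ! (i - 1)) (typb s) = c then {(i, i + arity s)} else {}) \<subseteq> CS (tcomp t i s) c"
proof -
  have m1: "1 \<le> arity s" using arity_pos by simp
  have A: "ctc t s i (sig i (arity s) a) (sig i (arity s) b) = Some c"
    if "colf t a b = Some c" "(a, b) \<noteq> (i, i + 1)" for a b
  proof -
    have r: "1 \<le> a" "a < b" using colf_range[OF that(1)] by auto
    consider "b \<le> i" | "a \<le> i" "i < b" | "i < a" by linarith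
    then show ?thesis
    proof cases
      case 1
      have "ctc t s i a b = colf t a b" by (rule ctc_b5) (use 1 r m1 in auto)
      then show ?thesis using 1 r that unfolding sig_def by simp
    next
      case 2
      have "ctc t s i a (b + arity s - 1) = colf t a (b + arity s - 1 + 1 - arity s)"
        by (rule ctc_b3) (use 2 r m1 that(2) in auto)
      then show ?thesis using 2 r that m1 unfolding sig_def by simp
    next
      case 3
      have "ctc t s i (a + arity s - 1) (b + arity s - 1) = colf t (a + arity s - 1 + 1 - arity s) (b + arity s - 1 + 1 - arity s)"
        by (rule ctc_b4) (use 3 r m1 that(2) in auto)
      then show ?thesis using 3 r that m1 unfolding sig_def by simp
    qed
  qed
  have B: "ctc t s i (a + i - 1) (b + i - 1) = Some c"
    if "colf s a b = Some c" "(a, b) \<noteq> (1, arity s + 1)" for a b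
  proof -
    have r: "1 \<le> a" "a < b" "b \<le> arity s + 1" using colf_range[OF that(1)] by auto
    have "ctc t s i (a + i - 1) (b + i - 1) = colf s (a + i - 1 + 1 - i) (b + i - 1 + 1 - i)"
      by (rule ctc_b2) (use r that(2) i in auto)
    then show ?thesis using r i that by simp
  qed
  have C: "ctc t s i i (i + arity s) = Some (comb (lvlp True t ! (i - 1)) (typb s))"
    using ctc_b1[where u=i and i=i and v="i + arity s" and s=s and t=t] tn by simp
  show ?thesis
    unfolding CS_def mapC_def mapD_def using A B C colf_tcomp[OF i] by auto
qed

lemma CS_tcomp:
  assumes "1 \<le> i" "i \<le> arity t" "t \<noteq> Leaf"
  shows "CS (tcomp t i s) c = mapC i (arity s) (CS t c) \<union> mapD i (arity s) (CS s c)
          \<union> (if comb (lvlp True t ! (i - 1)) (typb s) = c then {(i, i + arity s)} else {})"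
  using CS_tcomp_sub[OF assms] CS_tcomp_sup[OF assms] by blast

definition Bset :: "tree \<Rightarrow> (nat \<times> nat) set" where
  "Bset t = CS t Bl \<union> (if typb t then {(1, arity t + 1)} else {})"
definition explicit :: "tree \<Rightarrow> bnc" where
  "explicit t = BNC (arity t) (Bset t) (CS t Rd)"

lemma bnc_comp_alt: "bnc_comp C i D = BNC (bsize C + bsize D - 1)
   (mapC i (bsize D) (blues C) \<union> mapD i (bsize D) (blues D) \<union>
      (if (i, i + 1) \<in> blues C \<and> (1, bsize D + 1) \<in> blues D then {(i, i + bsize D)} else {}))
   (mapC i (bsize D) (reds C) \<union> mapD i (bsize D) (reds D) \<union>
      (if (i, i + 1) \<notin> blues C \<union> reds C \<and> (1, bsize D + 1) \<notin> blues D \<union> reds D then {(i, i + bsize D)} else {}))"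
  unfolding bnc_comp_def mapC_def mapD_def sig_def Let_def by simp

lemma mapC_Un: "mapC i m (A \<union> B) = mapC i m A \<union> mapC i m B"
  unfolding mapC_def by blast
lemma mapD_Un: "mapD i m (A \<union> B) = mapD i m A \<union> mapD i m B"
  unfolding mapD_def by blast
lemma mapC_empty[simp]: "mapC i m {} = {}"
  unfolding mapC_def by blast
lemma mapD_empty[simp]: "mapD i m {} = {}"
  unfolding mapD_def by blast
lemma mapC_single: "(a, b) \<noteq> (i, i + 1) \<Longrightarrow> mapC i m {(a, b)} = {(sig i m a, sig i m b)}"
  unfolding mapC_def by blast
lemma mapD_base: "mapD i m {(1, m + 1)} = {}"
  unfolding mapD_def by blast

lemma CS_Leaf[simp]: "CS Leaf c = {}"
  unfolding CS_def by simp

lemma colf_base: "colf t 1 (arity t + 1) = None"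
  using colf_range[of t 1 "arity t + 1"] by (cases "colf t 1 (arity t + 1)") auto

lemma colf_base'[simp]: "colf t (Suc 0) (Suc (arity t)) = None"
  using colf_base[of t] by simp
lemma mapC_edge[simp]: "mapC i m {(i, Suc i)} = {}"
  unfolding mapC_def by auto

lemma explicit_tcomp:
  assumes i: "1 \<le> i" "i \<le> arity t"
  shows "bnc_comp (explicit t) i (explicit s) = explicit (tcomp t i s)"
proof (cases "t = Leaf")
  case True
  have i1: "i = 1" using i True by simp
  have "bnc_comp (explicit t) i (explicit s) = BNC (arity s)
     (mapD 1 (arity s) (Bset s) \<union> (if (1, arity s + 1) \<in> Bset s then {(1, 1 + arity s)} else {}))
     (mapD 1 (arity s) (CS s Rd))"
    unfolding bnc_comp_alt explicit_def using True i1
    by (simp add: Bset_def CS_def colf_base)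
  also have "\<dots> = explicit s"
  proof -
    have "mapD 1 (arity s) S = S - {(1, arity s + 1)}" for S
      unfolding mapD_def by force
    moreover have "(1, arity s + 1) \<notin> CS s c" for c unfolding CS_def using colf_base by simp
    ultimately show ?thesis unfolding explicit_def Bset_def by auto
  qed
  finally show ?thesis using True i1 by simp
next
  case False
  define m where "m = arity s"
  define n where "n = arity t"
  have n2: "2 \<le> n" using arity_node[OF False] n_def by simp
  have m1: "1 \<le> m" using arity_pos m_def by simp
  have ar: "arity (tcomp t i s) = n + m - 1" using arity_tcomp[OF i] n_def m_def by simp
  have ty: "typb (tcomp t i s) = typb t" using typb_tcomp False by simp
  have edge: "colf t i (i + 1) = Some (comb (lvlp True t ! (i - 1)) True)"
    using colf_edge[OF False i] by simp
  have ne: "(i, i + 1) \<noteq> (1, n + 1)" using n2 i n_def by auto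
  have eB: "(i, i + 1) \<in> Bset t \<longleftrightarrow> lvlp True t ! (i - 1)"
    using edge ne unfolding Bset_def CS_def n_def by (auto simp: comb_def)
  have eR: "(i, i + 1) \<notin> CS t Rd"
    using edge unfolding CS_def by (auto simp: comb_def)
  have bB: "(1, m + 1) \<in> Bset s \<longleftrightarrow> typb s"
    using colf_base[of s] unfolding Bset_def CS_def m_def by auto
  have bR: "(1, m + 1) \<notin> CS s Rd"
    using colf_base[of s] unfolding CS_def m_def by auto
  have sb: "sig i m 1 = 1" "sig i m (n + 1) = n + m" using i n_def m1 unfolding sig_def by auto
  have B: "mapC i m (Bset t) \<union> mapD i m (Bset s) \<union> (if (i, i + 1) \<in> Bset t \<and> (1, m + 1) \<in> Bset s then {(i, i + m)} else {})
     = Bset (tcomp t i s)"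
  proof -
    have "mapC i m (Bset t) = mapC i m (CS t Bl) \<union> (if typb t then {(1, n + m)} else {})"
      unfolding Bset_def mapC_Un using mapC_single[OF ne[symmetric]] sb n_def by auto
    moreover have "mapD i m (Bset s) = mapD i m (CS s Bl)"
      unfolding Bset_def mapD_Un using mapD_base[of i m] m_def by auto
    moreover have "Bset (tcomp t i s) = mapC i m (CS t Bl) \<union> mapD i m (CS s Bl)
          \<union> (if comb (lvlp True t ! (i - 1)) (typb s) = Bl then {(i, i + m)} else {})
          \<union> (if typb t then {(1, n + m)} else {})"
      unfolding Bset_def CS_tcomp[OF i False] ty ar m_def using n2 m1 by auto
    ultimately show ?thesis using eB bB by (auto simp: comb_def)
  qed
  have R: "mapC i m (CS t Rd) \<union> mapD i m (CS s Rd) \<union> (if (i, i + 1) \<notin> Bset t \<union> CS t Rd \<and> (1, m + 1) \<notin> Bset s \<union> CS s Rd then {(i, i + m)} else {})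
     = CS (tcomp t i s) Rd"
    unfolding CS_tcomp[OF i False] m_def[symmetric] using eB eR bB bR by (auto simp: comb_def)
  have "bnc_comp (explicit t) i (explicit s) = BNC (n + m - 1)
     (mapC i m (Bset t) \<union> mapD i m (Bset s) \<union> (if (i, i + 1) \<in> Bset t \<and> (1, m + 1) \<in> Bset s then {(i, i + m)} else {}))
     (mapC i m (CS t Rd) \<union> mapD i m (CS s Rd) \<union> (if (i, i + 1) \<notin> Bset t \<union> CS t Rd \<and> (1, m + 1) \<notin> Bset s \<union> CS s Rd then {(i, i + m)} else {}))"
    unfolding bnc_comp_alt explicit_def by (simp only: bsize.simps blues.simps reds.simps m_def n_def)
  also have "\<dots> = BNC (arity (tcomp t i s)) (Bset (tcomp t i s)) (CS (tcomp t i s) Rd)"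
    by (simp only: B R ar)
  finally show ?thesis unfolding explicit_def .
qed

lemma explicit_Leaf: "explicit Leaf = bnc_unit"
  unfolding explicit_def Bset_def bnc_unit_def by simp

lemma gen_explicit: "gen_val g = explicit (Node g Leaf Leaf)"
proof -
  have "CS (Node g Leaf Leaf) c = (if comb (lvb g) True = c then {(1, 2)} else {})
      \<union> (if comb (\<not> lvb g) True = c then {(2, 3)} else {})" for c
    unfolding CS_def by (auto simp: colf.simps split: if_splits)
  then show ?thesis unfolding explicit_def Bset_def
    by (cases g) (auto simp: T_bbu_def T_uub_def comb_def)
qed

lemma eval_explicit: "eval t = explicit t"
proof (induction t)
  case Leaf then show ?case by (simp add: explicit_Leaf)
next
  case (Node g l r)
  have "eval (Node g l r) = bnc_comp (bnc_comp (explicit (Node g Leaf Leaf)) 2 (explicit r)) 1 (explicit l)"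
    using Node by (simp add: gen_explicit)
  also have "\<dots> = bnc_comp (explicit (tcomp (Node g Leaf Leaf) 2 r)) 1 (explicit l)"
    by (subst explicit_tcomp) auto
  also have "\<dots> = explicit (tcomp (tcomp (Node g Leaf Leaf) 2 r) 1 l)"
    by (subst explicit_tcomp) auto
  finally show ?case by simp
qed

lemma bsize_eval[simp]: "bsize (eval t) = arity t"
  by (simp add: eval_explicit explicit_def)

lemma eval_hom: "1 \<le> i \<Longrightarrow> i \<le> arity t \<Longrightarrow> eval (tcomp t i s) = bnc_comp (eval t) i (eval s)"
  by (simp add: eval_explicit explicit_tcomp)

lemma range_sub: "eval t \<in> generated_suboperad {T_bbu, T_uub}"
proof (induction t)
  case Leaf then show ?case by (simp add: generated_suboperad.unit)
next
  case (Node g l r)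
  have g: "gen_val g \<in> generated_suboperad {T_bbu, T_uub}"
    by (cases g) (auto intro: generated_suboperad.gen)
  have bs: "bsize (gen_val g) = 2" by (cases g) (auto simp: T_bbu_def T_uub_def)
  have "bnc_comp (gen_val g) 2 (eval r) \<in> generated_suboperad {T_bbu, T_uub}"
    using generated_suboperad.comp[OF g Node(2), of 2] bs by simp
  moreover have "bsize (bnc_comp (gen_val g) 2 (eval r)) \<ge> 1"
    unfolding bnc_comp_def Let_def using bs arity_pos[of r] by simp
  ultimately show ?case using generated_suboperad.comp[OF _ Node(1), of "bnc_comp (gen_val g) 2 (eval r)" 1]
    by simp
qed

lemma range_sup: "x \<in> generated_suboperad {T_bbu, T_uub} \<Longrightarrow> x \<in> range eval"
proof (induction rule: generated_suboperad.induct)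
  case (gen x)
  have "T_bbu = eval (Node GP Leaf Leaf)" "T_uub = eval (Node GQ Leaf Leaf)"
    using gen_explicit[of GP] gen_explicit[of GQ] eval_explicit gen_val.simps by metis+
  then show ?case using gen by (metis empty_iff insert_iff rangeI)
next
  case unit
  then show ?case using explicit_Leaf eval_explicit by (metis rangeI)
next
  case (comp x y i)
  then obtain t s where "x = eval t" "y = eval s" by auto
  then show ?case using comp eval_hom[of i t s] by (metis bsize_eval rangeI)
qed

lemma range_eq: "range eval = generated_suboperad {T_bbu, T_uub}"
  using range_sub range_sup by auto

lemma rels_eval: "rels t s \<Longrightarrow> eval t = eval s"
proof (induction rule: rels.induct)
  case 1
  have "CS (tcomp (tcomp gp 2 gp) 2 gq) c = CS (tcomp (tcomp gp 1 gq) 1 gp) c" if "c \<noteq> Nc" for c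
    using that unfolding CS_def by (auto simp: gp_def gq_def colf.simps comb_def split: if_splits)
  then show ?case by (simp add: eval_explicit explicit_def Bset_def gp_def gq_def)
next
  case 2
  have "CS (tcomp (tcomp gq 2 gq) 2 gp) c = CS (tcomp (tcomp gq 1 gp) 1 gq) c" if "c \<noteq> Nc" for c
    using that unfolding CS_def by (auto simp: gp_def gq_def colf.simps comb_def split: if_splits)
  then show ?case by (simp add: eval_explicit explicit_def Bset_def gp_def gq_def)
qed

lemma op_cong_eval: "op_cong rels t s \<Longrightarrow> eval t = eval s"
proof (induction rule: op_cong.induct)
  case (base t s) then show ?case by (rule rels_eval)
next
  case (compL t t' i s)
  have "arity t = arity t'" using compL.IH bsize_eval by metis
  then show ?case using compL.IH compL.hyps eval_hom by metis
next
  case (compR s s' i t)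
  then show ?case using eval_hom by metis
qed auto

lemma ctc_sig:
  assumes r: "1 \<le> a" "a < b" and ne: "(a, b) \<noteq> (i, i + 1)" and i: "1 \<le> i"
  shows "ctc t s i (sig i (arity s) a) (sig i (arity s) b) = colf t a b"
proof -
  have m1: "1 \<le> arity s" using arity_pos by simp
  consider "b \<le> i" | "a \<le> i" "i < b" | "i < a" by linarith
  then show ?thesis
  proof cases
    case 1
    have "ctc t s i a b = colf t a b" by (rule ctc_b5) (use 1 r m1 in auto)
    then show ?thesis using 1 r unfolding sig_def by simp
  next
    case 2
    have "ctc t s i a (b + arity s - 1) = colf t a (b + arity s - 1 + 1 - arity s)"
      by (rule ctc_b3) (use 2 r m1 ne in auto)
    then show ?thesis using 2 r m1 unfolding sig_def by simp
  next
    case 3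
    have "ctc t s i (a + arity s - 1) (b + arity s - 1) = colf t (a + arity s - 1 + 1 - arity s) (b + arity s - 1 + 1 - arity s)"
      by (rule ctc_b4) (use 3 r m1 ne in auto)
    then show ?thesis using 3 r m1 unfolding sig_def by simp
  qed
qed

lemma decomp: "colf t x y = Some c \<Longrightarrow> \<exists>t1 t2. t = tcomp t1 x t2 \<and> 1 \<le> x \<and> x \<le> arity t1 \<and> y = x + arity t2"
proof (induction t arbitrary: x y)
  case Leaf then show ?case by simp
next
  case (Node g l r)
  define a where "a = arity l"
  consider "x = 1 \<and> y = 1 + a" | "x = 1 + a \<and> y = 1 + a + arity r"
    | "y \<le> 1 + a \<and> \<not> (x = 1 \<and> y = 1 + a)" | "1 + a \<le> x \<and> \<not> (x = 1 + a \<and> y = 1 + a + arity r)"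
    | "x < 1 + a \<and> 1 + a < y" by linarith
  then show ?case
  proof cases
    case 1
    then show ?thesis by (intro exI[of _ "Node g Leaf r"] exI[of _ l]) (auto simp: a_def)
  next
    case 2
    then show ?thesis by (intro exI[of _ "Node g l Leaf"] exI[of _ r]) (auto simp: a_def)
  next
    case 3
    have "colf l x y = Some c" using Node.prems N3[of y l x g r] 3 by (simp add: a_def)
    then obtain l1 l2 where "l = tcomp l1 x l2" "1 \<le> x" "x \<le> arity l1" "y = x + arity l2"
      using Node.IH(1) by blast
    then show ?thesis by (intro exI[of _ "Node g l1 r"] exI[of _ l2]) auto
  next
    case 4
    have "colf r (x - a) (y - a) = Some c" using Node.prems N4[of l x y r g] 4 by (simp add: a_def)
    then obtain r1 r2 where h: "r = tcomp r1 (x - a) r2" "1 \<le> x - a" "x - a \<le> arity r1" "y - a = x - a + arity r2"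
      using Node.IH(2) by blast
    have "tcomp (Node g l r1) x r2 = Node g l r" using h 4 by (simp add: a_def)
    then show ?thesis using h 4 by (intro exI[of _ "Node g l r1"] exI[of _ r2]) (auto simp: a_def)
  next
    case 5
    then show ?thesis using Node.prems N5[of x l y g r] by (simp add: a_def)
  qed
qed

lemma comb_inj: "comb e1 b1 = comb e2 b2 \<Longrightarrow> comb e1 b1 \<noteq> Nc \<Longrightarrow> e1 = e2 \<and> b1 = b2"
  unfolding comb_def by (auto split: if_splits)

lemma CS_eval: "eval t = eval s \<Longrightarrow> c \<noteq> Nc \<Longrightarrow> colf t u v = Some c \<longleftrightarrow> colf s u v = Some c"
proof -
  assume e: "eval t = eval s" and c: "c \<noteq> Nc"
  have ar: "arity t = arity s" using e bsize_eval by metis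
  have B: "Bset t = Bset s" and R: "CS t Rd = CS s Rd" using e by (simp_all add: eval_explicit explicit_def)
  have "CS t Bl = Bset t - {(1, arity t + 1)}" "CS s Bl = Bset s - {(1, arity s + 1)}"
    unfolding Bset_def CS_def using colf_base by auto
  then have "CS t Bl = CS s Bl" using B ar by simp
  then show ?thesis using R c unfolding CS_def by (cases c) (auto simp: set_eq_iff)
qed

lemma typb_eval: "eval t = eval s \<Longrightarrow> typb t = typb s"
proof -
  assume e: "eval t = eval s"
  have ar: "arity t = arity s" using e bsize_eval by metis
  have B: "Bset t = Bset s" using e by (simp_all add: eval_explicit explicit_def)
  have "(1, arity t + 1) \<in> Bset t \<longleftrightarrow> typb t" "(1, arity s + 1) \<in> Bset s \<longleftrightarrow> typb s"
    unfolding Bset_def CS_def using colf_base by auto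
  then show ?thesis using B ar by simp
qed

lemma eval_eqI: "arity t = arity s \<Longrightarrow> typb t = typb s \<Longrightarrow>
   (\<And>u v c. c \<noteq> Nc \<Longrightarrow> colf t u v = Some c \<longleftrightarrow> colf s u v = Some c) \<Longrightarrow> eval t = eval s"
proof -
  assume a: "arity t = arity s" "typb t = typb s" "\<And>u v c. c \<noteq> Nc \<Longrightarrow> colf t u v = Some c \<longleftrightarrow> colf s u v = Some c"
  have "CS t c = CS s c" if "c \<noteq> Nc" for c unfolding CS_def using a(3)[OF that] by auto
  then show ?thesis using a unfolding eval_explicit explicit_def Bset_def by auto
qed

lemma cancel:
  assumes e: "eval (tcomp t1 x t2) = eval (tcomp s1 x s2)"
    and a1: "arity t1 = arity s1" and a2: "arity t2 = arity s2"
    and x: "1 \<le> x" "x \<le> arity t1" and n1: "t1 \<noteq> Leaf" "s1 \<noteq> Leaf"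
    and col: "colf (tcomp t1 x t2) x (x + arity t2) = Some c0" "c0 \<noteq> Nc"
  shows "eval t1 = eval s1 \<and> eval t2 = eval s2"
proof -
  define m where "m = arity t2"
  have xs: "1 \<le> x" "x \<le> arity s1" using x a1 by auto
  have E: "colf (tcomp t1 x t2) u v = Some c \<longleftrightarrow> colf (tcomp s1 x s2) u v = Some c" if "c \<noteq> Nc" for u v c
    using CS_eval[OF e that] .
  have sp1: "colf (tcomp t1 x t2) x (x + m) = Some (comb (lvlp True t1 ! (x - 1)) (typb t2))"
    using colf_tcomp[OF x] ctc_b1[where u=x and i=x and v="x + m" and s=t2 and t=t1] n1 m_def by simp
  have sp2: "colf (tcomp s1 x s2) x (x + m) = Some (comb (lvlp True s1 ! (x - 1)) (typb s2))"
    using colf_tcomp[OF xs] ctc_b1[where u=x and i=x and v="x + m" and s=s2 and t=s1] n1 m_def a2 by simp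
  have "colf (tcomp s1 x s2) x (x + m) = Some c0" using E[OF col(2)] col(1) m_def by simp
  then have c2: "comb (lvlp True s1 ! (x - 1)) (typb s2) = c0" using sp2 by simp
  have c1: "comb (lvlp True t1 ! (x - 1)) (typb t2) = c0" using sp1 col(1) m_def by simp
  have eq: "lvlp True t1 ! (x - 1) = lvlp True s1 ! (x - 1)" "typb t2 = typb s2"
    using comb_inj[of "lvlp True t1 ! (x - 1)" "typb t2" "lvlp True s1 ! (x - 1)" "typb s2"] c1 c2 col(2) by auto
  have P2: "eval t2 = eval s2"
  proof (rule eval_eqI[OF a2 eq(2)])
    fix u v c :: "_" assume c: "c \<noteq> Nc"
    show "colf t2 u v = Some c \<longleftrightarrow> colf s2 u v = Some c"
    proof (cases "1 \<le> u \<and> v \<le> m + 1 \<and> (u, v) \<noteq> (1, m + 1)")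
      case True
      have "colf (tcomp t1 x t2) (u + x - 1) (v + x - 1) = colf t2 (u + x - 1 + 1 - x) (v + x - 1 + 1 - x)"
        unfolding colf_tcomp[OF x] by (rule ctc_b2) (use True m_def x in auto)
      moreover have "colf (tcomp s1 x s2) (u + x - 1) (v + x - 1) = colf s2 (u + x - 1 + 1 - x) (v + x - 1 + 1 - x)"
        unfolding colf_tcomp[OF xs] by (rule ctc_b2) (use True m_def a2 x in auto)
      ultimately show ?thesis using E[OF c, of "u + x - 1" "v + x - 1"] True x by simp
    next
      case False
      then have "colf t2 u v = None" "colf s2 u v = None"
        using colf_range[of t2 u v] colf_range[of s2 u v] m_def a2
        by (cases "colf t2 u v"; cases "colf s2 u v"; auto)+
      then show ?thesis by simp
    qed
  qed
  have ty: "typb t1 = typb s1"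
    using typb_eval[OF e] typb_tcomp[of t1 x t2] typb_tcomp[of s1 x s2] n1 by simp
  have P1: "eval t1 = eval s1"
  proof (rule eval_eqI[OF a1 ty])
    fix u v c :: "_" assume c: "c \<noteq> Nc"
    show "colf t1 u v = Some c \<longleftrightarrow> colf s1 u v = Some c"
    proof (cases "1 \<le> u \<and> u < v")
      case True
      show ?thesis
      proof (cases "(u, v) = (x, x + 1)")
        case True
        then show ?thesis using colf_edge[OF n1(1) x, of True] colf_edge[OF n1(2) xs, of True] eq(1) by simp
      next
        case False
        have "colf (tcomp t1 x t2) (sig x m u) (sig x m v) = colf t1 u v"
          using colf_tcomp[OF x] ctc_sig[of u v x t1 t2] \<open>1 \<le> u \<and> u < v\<close> False x m_def by simp
        moreover have "colf (tcomp s1 x s2) (sig x m u) (sig x m v) = colf s1 u v"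
          using colf_tcomp[OF xs] ctc_sig[of u v x s1 s2] \<open>1 \<le> u \<and> u < v\<close> False x m_def a2 by simp
        ultimately show ?thesis using E[OF c] by metis
      qed
    next
      case False
      then have "colf t1 u v = None" "colf s1 u v = None"
        using colf_range[of t1 u v] colf_range[of s1 u v]
        by (cases "colf t1 u v"; cases "colf s1 u v"; auto)+
      then show ?thesis by simp
    qed
  qed
  show ?thesis using P1 P2 by simp
qed

fun fl :: "lab \<Rightarrow> lab" where "fl GP = GQ" | "fl GQ = GP"

fun unif :: "tree \<Rightarrow> bool" where
  "unif Leaf = True"
| "unif (Node g l r) = (unif l \<and> unif r \<and> (l \<noteq> Leaf \<longrightarrow> comb (lvb g) (typb l) = Nc)
       \<and> (r \<noteq> Leaf \<longrightarrow> comb (\<not> lvb g) (typb r) = Nc))"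

lemma lvb_fl[simp]: "lvb (fl g) = (\<not> lvb g)" by (cases g) auto
lemma fl_fl[simp]: "fl (fl g) = g" by (cases g) auto

lemma lab_neq_GP[simp]: "(g \<noteq> GP) = (g = GQ)" by (cases g) auto
lemma lab_neq_GQ[simp]: "(g \<noteq> GQ) = (g = GP)" by (cases g) auto

lemma unif_node_iff: "unif (Node g l r) \<longleftrightarrow> unif l \<and> unif r \<and> (l \<noteq> Leaf \<longrightarrow> (\<exists>a b. l = Node (fl g) a b))
   \<and> (r \<noteq> Leaf \<longrightarrow> (\<exists>a b. r = Node g a b))"
proof -
  have L: "l \<noteq> Leaf \<Longrightarrow> comb (lvb g) (typb l) = Nc \<longleftrightarrow> (\<exists>a b. l = Node (fl g) a b)"
    by (cases l; cases g) (auto simp: comb_def split: lab.splits) 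
  have R: "r \<noteq> Leaf \<Longrightarrow> comb (\<not> lvb g) (typb r) = Nc \<longleftrightarrow> (\<exists>a b. r = Node g a b)"
    by (cases r; cases g) (auto simp: comb_def split: lab.splits)
  show ?thesis using L R by auto
qed

declare unif.simps(2)[simp del]

lemma unif_of_nocol: "(\<And>u v. v \<noteq> Suc u \<Longrightarrow> colf t u v = None \<or> colf t u v = Some Nc) \<Longrightarrow> unif t"
proof (induction t)
  case Leaf then show ?case by simp
next
  case (Node g l r)
  define a where "a = arity l"
  have ul: "unif l"
  proof (rule Node.IH(1))
    fix u v :: nat assume uv: "v \<noteq> Suc u"
    show "colf l u v = None \<or> colf l u v = Some Nc"
    proof (cases "v \<le> 1 + a \<and> \<not> (u = 1 \<and> v = 1 + a)")
      case True
      then show ?thesis using N3[of v l u g r] Node.prems[OF uv] a_def by simp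
    next
      case False
      then show ?thesis using colf_base[of l] colf_big[of l v u] a_def by auto
    qed
  qed
  have ur: "unif r"
  proof (rule Node.IH(2))
    fix u v :: nat assume uv: "v \<noteq> Suc u"
    show "colf r u v = None \<or> colf r u v = Some Nc"
    proof (cases "u = 0 \<or> (u = 1 \<and> v = arity r + 1)")
      case True
      then show ?thesis using colf_base[of r] by auto
    next
      case False
      have "colf (Node g l r) (u + a) (v + a) = colf r (u + a - arity l) (v + a - arity l)"
        by (rule N4) (use False a_def in auto)
      then show ?thesis using Node.prems[of "v + a" "u + a"] uv a_def by simp
    qed
  qed
  have sl: "l \<noteq> Leaf \<Longrightarrow> comb (lvb g) (typb l) = Nc"
  proof -
    assume l: "l \<noteq> Leaf"
    have "Suc (arity l) \<noteq> Suc 1" using arity_node[OF l] by simp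
    then show ?thesis using Node.prems[of "Suc (arity l)" 1] N1[of g l r] by auto
  qed
  have sr: "r \<noteq> Leaf \<Longrightarrow> comb (\<not> lvb g) (typb r) = Nc"
  proof -
    assume r: "r \<noteq> Leaf"
    have "Suc (arity l + arity r) \<noteq> Suc (Suc (arity l))" using arity_node[OF r] by simp
    then show ?thesis using Node.prems[of "Suc (arity l + arity r)" "Suc (arity l)"] N2[of g l r] by auto
  qed
  show ?case using ul ur sl sr by (simp add: unif.simps)
qed

lemma op_cong_refl: "op_cong rels t t" by (rule op_cong.refl)
lemma op_cong_sym: "op_cong rels t s \<Longrightarrow> op_cong rels s t" by (rule op_cong.sym)
lemma op_cong_trans: "op_cong rels t s \<Longrightarrow> op_cong rels s u \<Longrightarrow> op_cong rels t u" by (rule op_cong.trans)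

lemma node_cong:
  assumes "op_cong rels l l'" "op_cong rels r r'"
  shows "op_cong rels (Node g l r) (Node g l' r')"
proof -
  have a: "op_cong rels (tcomp (Node g Leaf Leaf) 2 r) (tcomp (Node g Leaf Leaf) 2 r')"
    by (rule op_cong.compR) (use assms in auto)
  have b: "op_cong rels (tcomp (tcomp (Node g Leaf Leaf) 2 r) 1 l) (tcomp (tcomp (Node g Leaf Leaf) 2 r') 1 l)"
    by (rule op_cong.compL[OF a]) (auto simp: arity_pos)
  have c: "op_cong rels (tcomp (tcomp (Node g Leaf Leaf) 2 r') 1 l) (tcomp (tcomp (Node g Leaf Leaf) 2 r') 1 l')"
    by (rule op_cong.compR) (use assms in \<open>auto simp: arity_pos\<close>)
  show ?thesis using op_cong.trans[OF b c] by simp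
qed

lemma rot: "op_cong rels (Node X A (Node X (Node (fl X) B C) D)) (Node X (Node (fl X) (Node X A B) C) D)"
proof -
  let ?L = "Node X Leaf (Node X (Node (fl X) Leaf Leaf) Leaf)"
  let ?R = "Node X (Node (fl X) (Node X Leaf Leaf) Leaf) Leaf"
  have "rels ?L ?R"
  proof (cases X)
    case GP
    then show ?thesis using rels.intros(1) by (simp add: gp_def gq_def)
  next
    case GQ
    then show ?thesis using rels.intros(2) by (simp add: gp_def gq_def)
  qed
  then have "op_cong rels ?L ?R" by (rule op_cong.base)
  then have "op_cong rels (tcomp ?L 4 D) (tcomp ?R 4 D)" by (rule op_cong.compL) auto
  then have "op_cong rels (tcomp (tcomp ?L 4 D) 3 C) (tcomp (tcomp ?R 4 D) 3 C)" by (rule op_cong.compL) auto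
  then have "op_cong rels (tcomp (tcomp (tcomp ?L 4 D) 3 C) 2 B) (tcomp (tcomp (tcomp ?R 4 D) 3 C) 2 B)"
    by (rule op_cong.compL) auto
  then have "op_cong rels (tcomp (tcomp (tcomp (tcomp ?L 4 D) 3 C) 2 B) 1 A) (tcomp (tcomp (tcomp (tcomp ?R 4 D) 3 C) 2 B) 1 A)"
    by (rule op_cong.compL) (auto simp: arity_pos)
  then show ?thesis by simp
qed

fun rc :: "lab \<Rightarrow> nat \<Rightarrow> tree" where
  "rc g 0 = Leaf"
| "rc g (Suc k) = Node g Leaf (rc g k)"

fun canon :: "lab \<Rightarrow> tree \<Rightarrow> bool" where
  "canon g Leaf = True"
| "canon g (Node h l r) = (h = g \<and> canon (fl g) l \<and> (\<exists>k. r = rc g k))"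

lemma rc_label: "rc g k \<noteq> Leaf \<Longrightarrow> \<exists>a b. rc g k = Node g a b"
  by (cases k) auto

lemma unif_rc: "unif (rc g k)"
  by (induction k) (auto simp: unif_node_iff rc_label)

lemma arity_rc: "arity (rc g k) = Suc k"
  by (induction k) auto

lemma op_cong_arity: "op_cong rels t s \<Longrightarrow> arity t = arity s"
  using op_cong_eval bsize_eval by metis

lemma NR: "unif (Node g l r) \<Longrightarrow> \<exists>l' k. op_cong rels (Node g l r) (Node g l' (rc g k)) \<and> unif (Node g l' (rc g k))"
proof (induction "arity r" arbitrary: l r rule: less_induct)
  case less
  show ?case
  proof (cases r)
    case Leaf
    then show ?thesis using less.prems by (intro exI[of _ l] exI[of _ 0]) (auto intro: op_cong.refl)
  next
    case (Node h r1 r2)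
    have hg: "h = g" and ul: "unif l" and ur1: "unif r1" and ur2: "unif r2"
      and ll: "l \<noteq> Leaf \<longrightarrow> (\<exists>a b. l = Node (fl g) a b)"
      and lr1: "r1 \<noteq> Leaf \<longrightarrow> (\<exists>a b. r1 = Node (fl g) a b)"
      and lr2: "r2 \<noteq> Leaf \<longrightarrow> (\<exists>a b. r2 = Node g a b)"
      using less.prems Node by (auto simp: unif_node_iff)
    show ?thesis
    proof (cases r1)
      case (Node h1 B C)
      have h1: "h1 = fl g" using lr1 Node by auto
      have uB: "unif B" "unif C" "B \<noteq> Leaf \<longrightarrow> (\<exists>a b. B = Node g a b)" "C \<noteq> Leaf \<longrightarrow> (\<exists>a b. C = Node (fl g) a b)"
        using ur1 Node h1 by (auto simp: unif_node_iff)
      let ?L = "Node (fl g) (Node g l B) C"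
      have r1: "op_cong rels (Node g l r) (Node g ?L r2)"
        using rot[of g l B C r2] \<open>r = Node h r1 r2\<close> hg Node h1 by simp
      have uL: "unif (Node g ?L r2)" using uB ul ll ur2 lr2 by (auto simp: unif_node_iff)
      have "arity r2 < arity r" using \<open>r = Node h r1 r2\<close> arity_pos[of r1] by simp
      then obtain l' k where "op_cong rels (Node g ?L r2) (Node g l' (rc g k))" "unif (Node g l' (rc g k))"
        using less.hyps[OF _ uL] by blast
      then show ?thesis using op_cong.trans[OF r1] by blast
    next
      case Leaf
      have u0: "unif (Node g Leaf r2)" using ur2 lr2 by (auto simp: unif_node_iff)
      have "arity r2 < arity r" using \<open>r = Node h r1 r2\<close> arity_pos[of r1] by simp
      then obtain l'' k where c1: "op_cong rels (Node g Leaf r2) (Node g l'' (rc g k))"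
          and u1: "unif (Node g l'' (rc g k))"
        using less.hyps[OF _ u0] by blast
      have c2: "op_cong rels (Node g l r) (Node g l (Node g l'' (rc g k)))"
        using node_cong[OF op_cong.refl c1] \<open>r = Node h r1 r2\<close> hg Leaf by simp
      show ?thesis
      proof (cases l'')
        case Leaf
        have "Node g l (Node g l'' (rc g k)) = Node g l (rc g (Suc k))" using Leaf by simp
        moreover have "unif (Node g l (rc g (Suc k)))" using ul ll unif_rc[of g "Suc k"] rc_label[of g "Suc k"]
          by (auto simp: unif_node_iff)
        ultimately show ?thesis using c2 by metis
      next
        case (Node h2 B C)
        have h2: "h2 = fl g" and uB: "unif B" "unif C" "B \<noteq> Leaf \<longrightarrow> (\<exists>a b. B = Node g a b)" "C \<noteq> Leaf \<longrightarrow> (\<exists>a b. C = Node (fl g) a b)"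
          using u1 Node by (auto simp: unif_node_iff)
        have c3: "op_cong rels (Node g l (Node g l'' (rc g k))) (Node g (Node (fl g) (Node g l B) C) (rc g k))"
          using rot[of g l B C "rc g k"] Node h2 by simp
        have "unif (Node g (Node (fl g) (Node g l B) C) (rc g k))"
          using uB ul ll unif_rc[of g k] rc_label[of g k] by (auto simp: unif_node_iff)
        then show ?thesis using op_cong.trans[OF c2 c3] by blast
      qed
    qed
  qed
qed

lemma CN: "unif t \<Longrightarrow> (t \<noteq> Leaf \<longrightarrow> (\<exists>a b. t = Node g a b)) \<Longrightarrow> \<exists>t'. op_cong rels t t' \<and> canon g t'"
proof (induction "arity t" arbitrary: t g rule: less_induct)
  case less
  show ?case
  proof (cases t)
    case Leaf
    then show ?thesis by (intro exI[of _ Leaf]) (auto intro: op_cong.refl)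
  next
    case (Node h l r)
    have hg: "h = g" using less.prems Node by auto
    obtain l' k where c1: "op_cong rels t (Node g l' (rc g k))" and u: "unif (Node g l' (rc g k))"
      using NR[of g l r] less.prems Node hg by auto
    have ul: "unif l'" and ll: "l' \<noteq> Leaf \<longrightarrow> (\<exists>a b. l' = Node (fl g) a b)" using u by (auto simp: unif_node_iff)
    have "arity t = arity l' + Suc k" using op_cong_arity[OF c1] arity_rc by simp
    then have "arity l' < arity t" by simp
    then obtain l'' where c2: "op_cong rels l' l''" and cl: "canon (fl g) l''"
      using less.hyps[OF _ ul ll] by blast
    have "op_cong rels (Node g l' (rc g k)) (Node g l'' (rc g k))" using node_cong[OF c2 op_cong.refl] .
    then show ?thesis using op_cong.trans[OF c1] cl by (intro exI[of _ "Node g l'' (rc g k)"]) auto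
  qed
qed

definition trail :: "bool \<Rightarrow> bool list \<Rightarrow> nat" where
  "trail x xs = length (takeWhile (\<lambda>y. y = x) (rev xs))"

lemma takeWhile_rep: "takeWhile (\<lambda>y. y = x) (replicate k x @ ys) = replicate k x @ takeWhile (\<lambda>y. y = x) ys"
  by (induction k) auto

lemma trail_rep: "trail x (xs @ replicate k x) = trail x xs + k"
  unfolding trail_def by (simp add: takeWhile_rep)

lemma trail_snoc_same: "trail x (xs @ [x]) = Suc (trail x xs)"
  using trail_rep[of x xs 1] by simp

lemma trail_snoc_diff: "y \<noteq> x \<Longrightarrow> trail x (xs @ [y]) = 0"
  unfolding trail_def by simp

lemma lvlp_rc: "lvlp (\<not> lvb g) (rc g k) = replicate k (lvb g) @ [\<not> lvb g]"
  by (induction k) (auto simp: replicate_append_same[symmetric])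

lemma canon_last: "canon h t \<Longrightarrow> t \<noteq> Leaf \<Longrightarrow> last (lvlp c t) = (\<not> lvb h)"
proof (cases t)
  case (Node h' l r)
  assume "canon h t"
  then obtain k where "r = rc h k" "h' = h" using Node by auto
  then have "lvlp c t = lvlp (lvb h) l @ (replicate k (lvb h) @ [\<not> lvb h])"
    using Node lvlp_rc[of h k] by simp
  then show ?thesis by (simp only: last_appendR) simp
qed simp

lemma lvlp_ne: "lvlp c t \<noteq> []"
  using length_lvlp[of c t] arity_pos[of t] by auto

lemma canon_lvlp: "canon g (Node g l r) \<Longrightarrow> \<exists>k. r = rc g k \<and> lvlp c (Node g l r) = lvlp (lvb g) l @ replicate k (lvb g) @ [\<not> lvb g]"
  by (auto simp: lvlp_rc)

lemma canon_trail1: "canon (fl g) l \<Longrightarrow> trail (lvb g) (lvlp (lvb g) l) = 1"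
proof (cases l)
  case Leaf then show ?thesis by (simp add: trail_def)
next
  case (Node h l1 r1)
  assume c: "canon (fl g) l"
  then obtain k where k: "r1 = rc (fl g) k" "h = fl g" and cl1: "canon g l1" using Node by auto
  have L: "lvlp (lvb g) l = (lvlp (\<not> lvb g) l1 @ replicate k (\<not> lvb g)) @ [lvb g]"
    using Node k lvlp_rc[of "fl g" k] by simp
  define X where "X = lvlp (\<not> lvb g) l1 @ replicate k (\<not> lvb g)"
  have l1: "last (lvlp (\<not> lvb g) l1) = (\<not> lvb g)"
  proof (cases "l1 = Leaf")
    case True then show ?thesis by simp
  next
    case False then show ?thesis using canon_last[OF cl1 False] by simp
  qed
  have lX: "last X = (\<not> lvb g)"
  proof (cases k)
    case 0
    then show ?thesis using l1 X_def by simp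
  next
    case (Suc k')
    then show ?thesis unfolding X_def by (simp del: replicate_Suc add: replicate_append_same[symmetric])
  qed
  have ne: "X \<noteq> []" using lvlp_ne X_def by simp
  have ys: "X = butlast X @ [\<not> lvb g]" using append_butlast_last_id[OF ne] lX by simp
  have "trail (lvb g) (butlast X @ [\<not> lvb g]) = 0" by (rule trail_snoc_diff) simp
  then show ?thesis unfolding L X_def[symmetric] by (subst ys) (simp only: trail_snoc_same)
qed

lemma canon_uniq: "canon g t \<Longrightarrow> canon g s \<Longrightarrow> lvlp c t = lvlp c s \<Longrightarrow> t = s"
proof (induction t arbitrary: g s c)
  case Leaf
  have "length (lvlp c Leaf) = length (lvlp c s)" using Leaf.prems(3) by (rule arg_cong)
  then have "arity s = 1" by (simp only: length_lvlp) simp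
  then show ?case using arity_node[of s] by (cases "s = Leaf") auto
next
  case (Node h l r)
  show ?case
  proof (cases s)
    case Leaf
    have "length (lvlp c (Node h l r)) = length (lvlp c s)" using Node.prems(3) by (rule arg_cong)
    then have "arity (Node h l r) = 1" using Leaf by (simp only: length_lvlp) simp
    then show ?thesis using arity_node[of "Node h l r"] by simp
  next
    case (Node h' l' r')
    have hg: "h = g" "h' = g" using Node.prems \<open>s = Node h' l' r'\<close> by auto
    obtain k where k: "r = rc g k" and cl: "canon (fl g) l" using Node.prems hg by auto
    obtain k' where k': "r' = rc g k'" and cl': "canon (fl g) l'" using Node.prems hg \<open>s = Node h' l' r'\<close> by auto
    have "lvlp c (Node h l r) = lvlp (lvb g) l @ replicate k (lvb g) @ [\<not> lvb g]"
      using k hg lvlp_rc[of g k] by simp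
    moreover have "lvlp c s = lvlp (lvb g) l' @ replicate k' (lvb g) @ [\<not> lvb g]"
      using k' hg lvlp_rc[of g k'] \<open>s = Node h' l' r'\<close> by simp
    ultimately have e: "lvlp (lvb g) l @ replicate k (lvb g) = lvlp (lvb g) l' @ replicate k' (lvb g)"
      using Node.prems(3) by simp
    have "trail (lvb g) (lvlp (lvb g) l @ replicate k (lvb g)) = 1 + k"
      using trail_rep canon_trail1[OF cl] by simp
    moreover have "trail (lvb g) (lvlp (lvb g) l' @ replicate k' (lvb g)) = 1 + k'"
      using trail_rep canon_trail1[OF cl'] by simp
    ultimately have kk: "k = k'" using e by simp
    then have "lvlp (lvb g) l = lvlp (lvb g) l'" using e by simp
    then have "l = l'" using Node.IH(1)[OF cl cl'] by simp
    then show ?thesis using \<open>s = Node h' l' r'\<close> hg k k' kk by simp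
  qed
qed

lemma lvlp_eval:
  assumes e: "eval t = eval s" and n: "t \<noteq> Leaf" "s \<noteq> Leaf"
  shows "lvlp True t = lvlp True s"
proof (rule nth_equalityI)
  have ar: "arity t = arity s" using e bsize_eval by metis
  then show "length (lvlp True t) = length (lvlp True s)" by (simp add: length_lvlp)
  fix i assume "i < length (lvlp True t)"
  then have i: "1 \<le> Suc i" "Suc i \<le> arity t" "Suc i \<le> arity s" using ar by (auto simp: length_lvlp)
  have "colf t (Suc i) (Suc (Suc i)) = Some (comb (lvlp True t ! i) True)"
    using colf_edge[OF n(1) i(1,2), of True] by simp
  moreover have "colf s (Suc i) (Suc (Suc i)) = Some (comb (lvlp True s ! i) True)"
    using colf_edge[OF n(2) i(1,3), of True] by simp
  moreover have "colf t (Suc i) (Suc (Suc i)) = Some Bl \<longleftrightarrow> colf s (Suc i) (Suc (Suc i)) = Some Bl"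
    using CS_eval[OF e] by simp
  ultimately show "lvlp True t ! i = lvlp True s ! i"
    by (cases "lvlp True t ! i"; cases "lvlp True s ! i") (auto simp: comb_def)
qed

lemma cell:
  assumes u: "unif t" "unif s" and e: "eval t = eval s"
  shows "op_cong rels t s"
proof -
  have ar: "arity t = arity s" using e bsize_eval by metis
  show ?thesis
  proof (cases "t = Leaf")
    case True
    then have "s = Leaf" using ar arity_node[of s] by (cases "s = Leaf") auto
    then show ?thesis using True by (simp add: op_cong.refl)
  next
    case False
    then have sN: "s \<noteq> Leaf" using ar arity_node[OF False] by auto
    obtain g l r where t: "t = Node g l r" using False by (cases t) auto
    obtain g' l' r' where s: "s = Node g' l' r'" using sN by (cases s) auto
    have "g = g'" using typb_eval[OF e] t s by (cases g; cases g') auto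
    then obtain t' s' where c1: "op_cong rels t t'" "canon g t'" and c2: "op_cong rels s s'" "canon g s'"
      using CN[of t g] CN[of s g] u t s by blast
    have e': "eval t' = eval s'" using op_cong_eval[OF c1(1)] op_cong_eval[OF c2(1)] e by simp
    have "arity t' = arity t" "arity s' = arity s" using op_cong_arity c1 c2 by auto
    then have "t' \<noteq> Leaf" "s' \<noteq> Leaf" using arity_node[OF False] ar by auto
    then have "lvlp True t' = lvlp True s'" using lvlp_eval[OF e'] by simp
    then have "t' = s'" using canon_uniq[OF c1(2) c2(2)] by simp
    then show ?thesis using c1(1) c2(1) op_cong.trans op_cong.sym by metis
  qed
qed

lemma inj_main: "eval t = eval s \<Longrightarrow> op_cong rels t s"
proof (induction "arity t" arbitrary: t s rule: less_induct)
  case less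
  have e: "eval t = eval s" by fact
  have ar: "arity t = arity s" using e bsize_eval by metis
  show ?case
  proof (cases "\<exists>u v c. v \<noteq> Suc u \<and> c \<noteq> Nc \<and> colf t u v = Some c")
    case True
    then obtain u v c where uv: "v \<noteq> Suc u" "c \<noteq> Nc" "colf t u v = Some c" by blast
    have cs: "colf s u v = Some c" using CS_eval[OF e uv(2)] uv(3) by simp
    have rg: "1 \<le> u" "u < v" "v \<le> arity t + 1" "\<not> (u = 1 \<and> v = arity t + 1)" using colf_range[OF uv(3)] by auto
    obtain t1 t2 where t: "t = tcomp t1 u t2" "1 \<le> u" "u \<le> arity t1" "v = u + arity t2"
      using decomp[OF uv(3)] by blast
    obtain s1 s2 where s: "s = tcomp s1 u s2" "1 \<le> u" "u \<le> arity s1" "v = u + arity s2"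
      using decomp[OF cs] by blast
    have at: "arity t = arity t1 + arity t2 - 1" using arity_tcomp t by simp
    have as: "arity s = arity s1 + arity s2 - 1" using arity_tcomp s by simp
    have a2: "arity t2 = arity s2" using t s by simp
    have a1: "arity t1 = arity s1" using at as ar a2 arity_pos[of t1] arity_pos[of s1] arity_pos[of s2] by linarith
    have t2ge: "2 \<le> arity t2" using t(4) uv(1) rg by simp
    have t2lt: "arity t2 < arity t" using t(4) rg by auto
    have t1lt: "arity t1 < arity t" using at t2ge by simp
    have t1n: "t1 \<noteq> Leaf" using at t2lt by auto
    have s1n: "s1 \<noteq> Leaf" using arity_node[OF t1n] a1 by auto
    have "eval t1 = eval s1 \<and> eval t2 = eval s2"
      by (rule cancel[of t1 u t2 s1 s2 c]) (use e t s a1 a2 t1n s1n uv in auto)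
    then have "op_cong rels t1 s1" "op_cong rels t2 s2"
      using less.hyps[OF t1lt] less.hyps[OF t2lt] by auto
    then have "op_cong rels (tcomp t1 u t2) (tcomp s1 u t2)" "op_cong rels (tcomp s1 u t2) (tcomp s1 u s2)"
      using op_cong.compL op_cong.compR t s by auto
    then show ?thesis using t(1) s(1) op_cong.trans by metis
  next
    case False
    have ut: "unif t" using False by (intro unif_of_nocol) (metis col.exhaust option.exhaust)
    have us: "unif s"
    proof (rule unif_of_nocol)
      fix u v :: nat assume uv: "v \<noteq> Suc u"
      have "\<not> (colf s u v = Some c)" if "c \<noteq> Nc" for c
        using False CS_eval[OF e that, of u v] uv that by blast
      then show "colf s u v = None \<or> colf s u v = Some Nc" by (metis col.exhaust option.exhaust col.distinct)
    qed
    show ?thesis using cell[OF ut us e] .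
  qed
qed

theorem theorem3p15:
  shows "range eval = generated_suboperad {T_bbu, T_uub}
         \<and> (\<forall>t s. eval t = eval s \<longleftrightarrow> op_cong rels t s)"
  using range_eq inj_main op_cong_eval by blast

end
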